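(* Let $X\neq\emptyset$ be countable, $F=(F_x)_{x\in X}$ a family of finite-dimensional complex vector spaces, and $A\colon\Gamma(X;F)\to\Gamma(X;F)$ a continuous linear operator whose dual operator $A'\colon\Gamma_c(X;F')\to\Gamma_c(X;F')$ is injective. Then for every finite nonempty $K\subseteq X$ there exist $\varepsilon>0$ and a finite nonempty $K'\subseteq X$ such that $\overline{A(U_K)}\supseteq\varepsilon U_{K'}$, where the closure is taken in $\Gamma(X;F)$.
   Context: $\Gamma(X;F)=\prod_x F_x$ carries the product topology, i.e. the topology generated by seminorms $p_K(f)=\sum_{x\in K}\|f(x)\|_x$ for finite $K\subseteq X$, with $\|\cdot\|_x$ a fixed norm on $F_x$. $U_K:=\{f\in\Gamma(X;F)\mid p_K(f)\le1\}$. $\Gamma_c(X;F')$ is the space of finitely supported sections of the dual bundle $F'=(F'_x)$, identified with the continuous dual of $\Gamma(X;F)$ via $(\varphi,f)=\sum_x\varphi(x)(f(x))$; the dual operator is defined by $(A'\varphi,f)=(\varphi,Af)$. *)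

theory Defs
  imports "HOL-Analysis.Analysis"
begin

text \<open>Model: the fibre F_x is the d x -dimensional complex space, represented as
  functions nat => complex vanishing from index d x on (i.e. C^(d x)).\<close>

definition fiber :: "nat \<Rightarrow> (nat \<Rightarrow> complex) set" where
  "fiber n = {v. \<forall>i\<ge>n. v i = 0}"

text \<open>Gamma(X;F): all sections (X is the whole countable type 'x).\<close>
definition sections :: "('x \<Rightarrow> nat) \<Rightarrow> ('x \<Rightarrow> nat \<Rightarrow> complex) set" where
  "sections d = {f. \<forall>x. f x \<in> fiber (d x)}"

definition norm_on :: "nat \<Rightarrow> ((nat \<Rightarrow> complex) \<Rightarrow> real) \<Rightarrow> bool" where
  "norm_on n N \<longleftrightarrow>
     (\<forall>v\<in>fiber n. 0 \<le> N v \<and> (N v = 0 \<longleftrightarrow> (\<forall>i. v i = 0))) \<and>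
     (\<forall>c. \<forall>v\<in>fiber n. N (\<lambda>i. c * v i) = cmod c * N v) \<and>
     (\<forall>v\<in>fiber n. \<forall>w\<in>fiber n. N (\<lambda>i. v i + w i) \<le> N v + N w)"

definition pK :: "('x \<Rightarrow> (nat \<Rightarrow> complex) \<Rightarrow> real) \<Rightarrow> 'x set \<Rightarrow> ('x \<Rightarrow> nat \<Rightarrow> complex) \<Rightarrow> real" where
  "pK N K f = (\<Sum>x\<in>K. N x (f x))"

definition Uset :: "('x \<Rightarrow> nat) \<Rightarrow> ('x \<Rightarrow> (nat \<Rightarrow> complex) \<Rightarrow> real) \<Rightarrow> 'x set
                     \<Rightarrow> ('x \<Rightarrow> nat \<Rightarrow> complex) set" where
  "Uset d N K = {f \<in> sections d. pK N K f \<le> 1}"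

definition gamma_top :: "('x \<Rightarrow> nat) \<Rightarrow> ('x \<Rightarrow> (nat \<Rightarrow> complex) \<Rightarrow> real)
                          \<Rightarrow> ('x \<Rightarrow> nat \<Rightarrow> complex) topology" where
  "gamma_top d N = subtopology
     (topology_generated_by
        {{g \<in> sections d. pK N K (\<lambda>x i. g x i - f x i) < r} | f K r. f \<in> sections d \<and> finite K \<and> r > 0})
     (sections d)"

definition scale_set :: "real \<Rightarrow> ('x \<Rightarrow> nat \<Rightarrow> complex) set \<Rightarrow> ('x \<Rightarrow> nat \<Rightarrow> complex) set" where
  "scale_set e U = (\<lambda>f. \<lambda>x i. complex_of_real e * f x i) ` U"

definition linear_on_sections :: "('x \<Rightarrow> nat) \<Rightarrow> (('x \<Rightarrow> nat \<Rightarrow> complex) \<Rightarrow> ('x \<Rightarrow> nat \<Rightarrow> complex)) \<Rightarrow> bool" where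
  "linear_on_sections d A \<longleftrightarrow>
     A ` sections d \<subseteq> sections d \<and>
     (\<forall>f\<in>sections d. \<forall>g\<in>sections d. A (\<lambda>x i. f x i + g x i) = (\<lambda>x i. A f x i + A g x i)) \<and>
     (\<forall>c. \<forall>f\<in>sections d. A (\<lambda>x i. c * f x i) = (\<lambda>x i. c * A f x i))"

text \<open>Gamma_c(X;F'): finitely supported sections of the dual bundle; phi x is a
  complex-linear functional on the fibre F_x (its values off the fibre are irrelevant).\<close>
definition dual_support :: "('x \<Rightarrow> nat) \<Rightarrow> ('x \<Rightarrow> (nat \<Rightarrow> complex) \<Rightarrow> complex) \<Rightarrow> 'x set" where
  "dual_support d \<phi> = {x. \<exists>v\<in>fiber (d x). \<phi> x v \<noteq> 0}"

definition dual_sections :: "('x \<Rightarrow> nat) \<Rightarrow> ('x \<Rightarrow> (nat \<Rightarrow> complex) \<Rightarrow> complex) set" where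
  "dual_sections d = {\<phi>.
     (\<forall>x. (\<forall>v\<in>fiber (d x). \<forall>w\<in>fiber (d x). \<phi> x (\<lambda>i. v i + w i) = \<phi> x v + \<phi> x w) \<and>
          (\<forall>c. \<forall>v\<in>fiber (d x). \<phi> x (\<lambda>i. c * v i) = c * \<phi> x v)) \<and>
     finite (dual_support d \<phi>)}"

definition pairing :: "('x \<Rightarrow> nat) \<Rightarrow> ('x \<Rightarrow> (nat \<Rightarrow> complex) \<Rightarrow> complex) \<Rightarrow> ('x \<Rightarrow> nat \<Rightarrow> complex) \<Rightarrow> complex" where
  "pairing d \<phi> f = (\<Sum>x\<in>dual_support d \<phi>. \<phi> x (f x))"

text \<open>The dual operator A' (defined by (A' phi, f) = (phi, A f)) is injective on Gamma_c:
  A' phi = 0 (as a functional on Gamma) forces phi = 0.\<close>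
definition dual_op_injective :: "('x \<Rightarrow> nat) \<Rightarrow> (('x \<Rightarrow> nat \<Rightarrow> complex) \<Rightarrow> ('x \<Rightarrow> nat \<Rightarrow> complex)) \<Rightarrow> bool" where
  "dual_op_injective d A \<longleftrightarrow>
     (\<forall>\<phi>\<in>dual_sections d. \<forall>\<psi>\<in>dual_sections d.
        (\<forall>f\<in>sections d. pairing d \<phi> (A f) = pairing d \<psi> (A f)) \<longrightarrow>
        (\<forall>x. \<forall>v\<in>fiber (d x). \<phi> x v = \<psi> x v))"

end

theory Submission
  imports Defs "HOL-Library.Function_Algebras"
begin

lemma norm_on_props:
  assumes "norm_on n N"
  shows "\<And>v. v \<in> fiber n \<Longrightarrow> 0 \<le> N v"
    and "\<And>v. v \<in> fiber n \<Longrightarrow> N v = 0 \<longleftrightarrow> (\<forall>i. v i = 0)"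
    and "\<And>c v. v \<in> fiber n \<Longrightarrow> N (\<lambda>i. c * v i) = cmod c * N v"
    and "\<And>v w. v \<in> fiber n \<Longrightarrow> w \<in> fiber n \<Longrightarrow> N (\<lambda>i. v i + w i) \<le> N v + N w"
  using assms unfolding norm_on_def by auto

lemma fiber_add: "v \<in> fiber n \<Longrightarrow> w \<in> fiber n \<Longrightarrow> (\<lambda>i. v i + w i) \<in> fiber n"
  and fiber_diff: "v \<in> fiber n \<Longrightarrow> w \<in> fiber n \<Longrightarrow> (\<lambda>i. v i - w i) \<in> fiber n"
  and fiber_scale: "v \<in> fiber n \<Longrightarrow> (\<lambda>i. c * v i) \<in> fiber n"
  by (auto simp: fiber_def)

lemma norm_on_diff:
  assumes "norm_on n N" "v \<in> fiber n" "w \<in> fiber n"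
  shows "N v \<le> N w + N (\<lambda>i. v i - w i)"
proof -
  have "N (\<lambda>i. w i + (v i - w i)) \<le> N w + N (\<lambda>i. v i - w i)"
    using norm_on_props(4)[OF assms(1) assms(3) fiber_diff[OF assms(2,3)]] .
  then show ?thesis by simp
qed

definition unitv :: "nat \<Rightarrow> nat \<Rightarrow> complex" where
  "unitv k = (\<lambda>j. if j = k then 1 else 0)"

lemma norm_on_upper:
  assumes "norm_on n N" "u \<in> fiber n"
  shows "N u \<le> (\<Sum>i<n. cmod (u i) * N (unitv i))"
proof -
  have "k \<le> n \<Longrightarrow> N (\<lambda>j. if j < k then u j else 0) \<le> (\<Sum>i<k. cmod (u i) * N (unitv i))" for k
  proof (induction k)
    case 0
    have "N (\<lambda>j. 0 * u j) = 0" using norm_on_props(3)[OF assms(1) assms(2), of 0] by simp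
    then show ?case by simp
  next
    case (Suc k)
    have tk: "(\<lambda>j. if j < k then u j else 0) \<in> fiber n" using assms(2) Suc.prems by (auto simp: fiber_def)
    have ek: "unitv k \<in> fiber n" using Suc.prems by (auto simp: fiber_def unitv_def)
    have eq: "(\<lambda>j. if j < Suc k then u j else 0) = (\<lambda>j. (if j < k then u j else 0) + u k * unitv k j)"
      by (rule ext) (auto simp: unitv_def less_Suc_eq)
    have "N (\<lambda>j. if j < Suc k then u j else 0) \<le> N (\<lambda>j. if j < k then u j else 0) + N (\<lambda>j. u k * unitv k j)"
      unfolding eq by (rule norm_on_props(4)[OF assms(1) tk fiber_scale[OF ek]])
    also have "N (\<lambda>j. u k * unitv k j) = cmod (u k) * N (unitv k)"
      by (rule norm_on_props(3)[OF assms(1) ek])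
    finally show ?case using Suc by simp
  qed
  from this[of n] have "N (\<lambda>j. if j < n then u j else 0) \<le> (\<Sum>i<n. cmod (u i) * N (unitv i))" by simp
  moreover have "(\<lambda>j. if j < n then u j else 0) = u" using assms(2) by (auto simp: fiber_def)
  ultimately show ?thesis by simp
qed

lemma norm_on_cont:
  assumes "norm_on n N"
  shows "continuous_on (fiber n) N"
proof -
  have "((\<lambda>v. N v - N w) \<longlongrightarrow> 0) (at w within fiber n)" if w: "w \<in> fiber n" for w
  proof (rule Lim_null_comparison)
    let ?g = "\<lambda>v. (\<Sum>i<n. cmod (v i - w i) * N (unitv i)) + (\<Sum>i<n. cmod (w i - v i) * N (unitv i))"
    show "\<forall>\<^sub>F v in at w within fiber n. norm (N v - N w) \<le> ?g v"
      unfolding eventually_at_filter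
    proof (intro always_eventually allI impI)
      fix v assume "v \<noteq> w" and v: "v \<in> fiber n"
      have a: "N v \<le> N w + N (\<lambda>i. v i - w i)" by (rule norm_on_diff[OF assms v w])
      have b: "N w \<le> N v + N (\<lambda>i. w i - v i)" by (rule norm_on_diff[OF assms w v])
      have c: "N (\<lambda>i. v i - w i) \<le> (\<Sum>i<n. cmod (v i - w i) * N (unitv i))"
        using norm_on_upper[OF assms fiber_diff[OF v w]] by simp
      have d: "N (\<lambda>i. w i - v i) \<le> (\<Sum>i<n. cmod (w i - v i) * N (unitv i))"
        using norm_on_upper[OF assms fiber_diff[OF w v]] by simp
      have e: "0 \<le> (\<Sum>i<n. cmod (v i - w i) * N (unitv i))" "0 \<le> (\<Sum>i<n. cmod (w i - v i) * N (unitv i))"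
        using d c norm_on_props(1)[OF assms fiber_diff[OF w v]] norm_on_props(1)[OF assms fiber_diff[OF v w]]
        by linarith+
      show "norm (N v - N w) \<le> ?g v" using a b c d e by simp
    qed
    have "continuous_on UNIV ?g"
      by (intro continuous_intros continuous_on_product_coordinates)
    then have "(?g \<longlongrightarrow> ?g w) (at w within fiber n)"
      by (meson UNIV_I continuous_on_def tendsto_within_subset top_greatest)
    then show "(?g \<longlongrightarrow> 0) (at w within fiber n)" by simp
  qed
  then have "(N \<longlongrightarrow> N w) (at w within fiber n)" if "w \<in> fiber n" for w
    using that by (simp add: LIM_zero_iff)
  then show ?thesis by (simp add: continuous_on_def)
qed

lemma norm_equiv:
  assumes "norm_on n N"
  shows "\<exists>c>0. \<forall>v\<in>fiber n. (\<Sum>i<n. cmod (v i)) \<le> c * N v"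
proof (cases "n = 0")
  case True
  then show ?thesis using norm_on_props(1)[OF assms] by (intro exI[of _ 1]) auto
next
  case False
  define S1 where "S1 = {v \<in> fiber n. (\<Sum>i<n. cmod (v i)) = 1}"
  define P where "P = PiE UNIV (\<lambda>i. if i < n then cball (0::complex) 1 else {0})"
  have "compactin (product_topology (\<lambda>i. euclidean) UNIV) P"
    unfolding P_def compactin_PiE by auto
  then have cP: "compact P" by (simp add: euclidean_product_topology)
  have cl: "closed {v::nat\<Rightarrow>complex. (\<Sum>i<n. cmod (v i)) = 1}"
    by (intro closed_Collect_eq continuous_intros continuous_on_product_coordinates)
  have S1eq: "S1 = P \<inter> {v. (\<Sum>i<n. cmod (v i)) = 1}"
  proof (intro set_eqI iffI)
    fix v assume v: "v \<in> S1"
    have "cmod (v i) \<le> 1" if "i < n" for i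
    proof -
      have "cmod (v i) \<le> (\<Sum>i<n. cmod (v i))"
        by (rule member_le_sum) (use that in auto)
      then show ?thesis using v by (simp add: S1_def)
    qed
    then show "v \<in> P \<inter> {v. (\<Sum>i<n. cmod (v i)) = 1}"
      using v by (auto simp: S1_def P_def fiber_def PiE_def)
  next
    fix v assume "v \<in> P \<inter> {v. (\<Sum>i<n. cmod (v i)) = 1}"
    then show "v \<in> S1"
      by (auto simp: S1_def P_def fiber_def PiE_def split: if_splits)
  qed
  have cS1: "compact S1" unfolding S1eq using cP cl by (rule compact_Int_closed)
  have "(\<lambda>i. cmod (unitv 0 i)) = (\<lambda>i. if i = 0 then 1 else 0)" by (auto simp: unitv_def)
  then have "(\<Sum>i<n. cmod (unitv 0 i)) = (\<Sum>i<n. if i = 0 then 1 else 0)" by metis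
  also have "\<dots> = 1" using False by (simp add: sum.delta)
  finally have "(\<Sum>i<n. cmod (unitv 0 i)) = 1" .
  then have ne: "unitv 0 \<in> S1" using False by (auto simp: S1_def fiber_def unitv_def)
  have contS1: "continuous_on S1 N"
    by (rule continuous_on_subset[OF norm_on_cont[OF assms]]) (auto simp: S1_def)
  obtain x0 where x0: "x0 \<in> S1" "\<And>y. y \<in> S1 \<Longrightarrow> N x0 \<le> N y"
    using continuous_attains_inf[OF cS1 _ contS1] ne by blast
  define m where "m = N x0"
  have x0f: "x0 \<in> fiber n" using x0 by (simp add: S1_def)
  have "x0 \<noteq> (\<lambda>i. 0)" using x0(1) False by (auto simp: S1_def)
  then have "N x0 \<noteq> 0" using norm_on_props(2)[OF assms x0f] by auto
  then have mpos: "m > 0" using norm_on_props(1)[OF assms x0f] by (simp add: m_def)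
  show ?thesis
  proof (intro exI[of _ "1/m"] conjI ballI)
    show "1/m > 0" using mpos by simp
    fix v assume v: "v \<in> fiber n"
    define s where "s = (\<Sum>i<n. cmod (v i))"
    show "(\<Sum>i<n. cmod (v i)) \<le> 1 / m * N v"
    proof (cases "s = 0")
      case True
      then show ?thesis using norm_on_props(1)[OF assms v] mpos by (simp add: s_def)
    next
      case False
      then have spos: "s > 0" unfolding s_def by (simp add: order_le_neq_trans sum_nonneg)
      define w where "w = (\<lambda>i. complex_of_real (1/s) * v i)"
      have "cmod (w i) = (1/s) * cmod (v i)" for i
        using spos by (simp add: w_def norm_mult norm_divide)
      then have "(\<Sum>i<n. cmod (w i)) = (1/s) * s"
        unfolding s_def by (simp add: sum_distrib_left)
      then have "w \<in> S1" using spos v by (auto simp: S1_def w_def fiber_def)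
      then have "m \<le> N w" using x0(2) by (simp add: m_def)
      also have "N w = (1/s) * N v"
        unfolding w_def using norm_on_props(3)[OF assms v, of "complex_of_real (1/s)"] spos
        by (simp add: norm_divide)
      finally have "m * s \<le> N v" using spos by (simp add: field_simps)
      then show ?thesis using mpos by (simp add: s_def[symmetric] field_simps)
    qed
  qed
qed

definition sc :: "complex \<Rightarrow> ('x \<Rightarrow> nat \<Rightarrow> complex) \<Rightarrow> ('x \<Rightarrow> nat \<Rightarrow> complex)" where
  "sc c f = (\<lambda>x i. c * f x i)"

interpretation vs: vector_space sc
  by unfold_locales (auto simp: sc_def fun_eq_iff algebra_simps)

interpretation vc: vector_space "(*) :: complex \<Rightarrow> complex \<Rightarrow> complex"
  by unfold_locales (auto simp: algebra_simps)

interpretation vsp: vector_space_pair sc "(*) :: complex \<Rightarrow> complex \<Rightarrow> complex"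
  by unfold_locales

lemma sum_apply_fun: "(sum F J) x = sum (\<lambda>j. F j x) J"
  by (induction J rule: infinite_finite_induct) auto

lemma plus_lam: "(\<lambda>x i. f x i + g x i) = f + g"
  by (auto simp: fun_eq_iff)

lemma sec_add: "f \<in> sections d \<Longrightarrow> g \<in> sections d \<Longrightarrow> f + g \<in> sections d"
  and sec_diff: "f \<in> sections d \<Longrightarrow> g \<in> sections d \<Longrightarrow> f - g \<in> sections d"
  and sec_sc: "f \<in> sections d \<Longrightarrow> sc c f \<in> sections d"
  and sec_zero: "0 \<in> sections d"
  by (auto simp: sections_def fiber_def sc_def)

lemma sec_sum: "(\<And>j. j \<in> J \<Longrightarrow> F j \<in> sections d) \<Longrightarrow> sum F J \<in> sections d"
  by (induction J rule: infinite_finite_induct) (auto intro: sec_add sec_zero)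

definition restr :: "'x set \<Rightarrow> ('x \<Rightarrow> nat \<Rightarrow> complex) \<Rightarrow> ('x \<Rightarrow> nat \<Rightarrow> complex)" where
  "restr L f = (\<lambda>x. if x \<in> L then f x else 0)"

definition single :: "'x \<Rightarrow> (nat \<Rightarrow> complex) \<Rightarrow> ('x \<Rightarrow> nat \<Rightarrow> complex)" where
  "single x v = (\<lambda>y. if y = x then v else 0)"

lemma sec_restr: "f \<in> sections d \<Longrightarrow> restr L f \<in> sections d"
  by (auto simp: sections_def fiber_def restr_def)

lemma linear_restr: "Vector_Spaces.linear sc sc (restr L)"
  by unfold_locales (auto simp: restr_def sc_def fun_eq_iff)

lemma A_add: "linear_on_sections d A \<Longrightarrow> f \<in> sections d \<Longrightarrow> g \<in> sections d \<Longrightarrow> A (f + g) = A f + A g"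
  unfolding linear_on_sections_def plus_lam[symmetric] by auto

lemma A_sc: "linear_on_sections d A \<Longrightarrow> f \<in> sections d \<Longrightarrow> A (sc c f) = sc c (A f)"
  unfolding linear_on_sections_def sc_def by auto

lemma A_sec: "linear_on_sections d A \<Longrightarrow> f \<in> sections d \<Longrightarrow> A f \<in> sections d"
  unfolding linear_on_sections_def by auto

lemma A_zero: "linear_on_sections d A \<Longrightarrow> A 0 = 0"
proof -
  assume lin: "linear_on_sections d A"
  have "A (sc 0 0) = sc 0 (A 0)" by (rule A_sc[OF lin sec_zero])
  moreover have "sc 0 (0::'x \<Rightarrow> nat \<Rightarrow> complex) = 0" "sc 0 (A 0) = 0" by (auto simp: sc_def fun_eq_iff)
  ultimately show ?thesis by simp
qed

lemma A_diff: "linear_on_sections d A \<Longrightarrow> f \<in> sections d \<Longrightarrow> g \<in> sections d \<Longrightarrow> A (f - g) = A f - A g"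
proof -
  assume lin: "linear_on_sections d A" and f: "f \<in> sections d" and g: "g \<in> sections d"
  have "A (f - g + g) = A (f - g) + A g" by (rule A_add[OF lin sec_diff[OF f g] g])
  then show ?thesis by (simp add: algebra_simps)
qed

lemma A_sum: "linear_on_sections d A \<Longrightarrow> (\<And>j. j \<in> J \<Longrightarrow> F j \<in> sections d) \<Longrightarrow> A (sum F J) = (\<Sum>j\<in>J. A (F j))"
proof (induction J rule: infinite_finite_induct)
  case (insert j J)
  then show ?case using A_add[OF insert.prems(1), of "F j" "sum F J"] sec_sum[of J F d] by auto
qed (simp_all add: A_zero fun_eq_iff)

lemma pK_add: "\<forall>x. norm_on (d x) (N x) \<Longrightarrow> f \<in> sections d \<Longrightarrow> g \<in> sections d \<Longrightarrow> pK N K (f + g) \<le> pK N K f + pK N K g"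
  unfolding pK_def sum.distrib[symmetric]
  by (rule sum_mono) (auto simp: sections_def norm_on_def plus_fun_def)

lemma pK_sc: "\<forall>x. norm_on (d x) (N x) \<Longrightarrow> f \<in> sections d \<Longrightarrow> pK N K (sc c f) = cmod c * pK N K f"
  unfolding pK_def sum_distrib_left
  by (rule sum.cong) (auto simp: sections_def norm_on_def sc_def)

lemma pK_nonneg: "\<forall>x. norm_on (d x) (N x) \<Longrightarrow> f \<in> sections d \<Longrightarrow> 0 \<le> pK N K f"
  unfolding pK_def by (rule sum_nonneg) (auto simp: sections_def norm_on_def)

lemma pK_zero: "\<forall>x. norm_on (d x) (N x) \<Longrightarrow> pK N K 0 = 0"
proof -
  assume n: "\<forall>x. norm_on (d x) (N x)"
  have "pK N K (sc 0 0) = 0" using pK_sc[OF n sec_zero, of K 0] by simp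
  moreover have "sc 0 (0::'x \<Rightarrow> nat \<Rightarrow> complex) = 0" by (auto simp: sc_def fun_eq_iff)
  ultimately show ?thesis by simp
qed

lemma pK_sum: "\<forall>x. norm_on (d x) (N x) \<Longrightarrow> (\<And>j. j \<in> J \<Longrightarrow> F j \<in> sections d) \<Longrightarrow> pK N K (sum F J) \<le> (\<Sum>j\<in>J. pK N K (F j))"
proof (induction J rule: infinite_finite_induct)
  case (insert j J)
  have "pK N K (sum F (insert j J)) = pK N K (F j + sum F J)" using insert by simp
  also have "\<dots> \<le> pK N K (F j) + pK N K (sum F J)"
    by (rule pK_add[OF insert.prems(1)]) (use insert sec_sum[of J F d] in auto)
  also have "\<dots> \<le> pK N K (F j) + (\<Sum>j\<in>J. pK N K (F j))" using insert by simp
  also have "\<dots> = (\<Sum>j\<in>insert j J. pK N K (F j))" using insert.hyps by simp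
  finally show ?case .
qed (auto simp: pK_zero)

lemma pK_cong: "(\<And>x. x \<in> K \<Longrightarrow> f x = g x) \<Longrightarrow> pK N K f = pK N K g"
  unfolding pK_def by auto

lemma expand:
  assumes "f \<in> sections d" "finite L"
  shows "restr L f = (\<Sum>x\<in>L. \<Sum>i<d x. sc (f x i) (single x (unitv i)))"
proof (rule ext, rule ext)
  fix y j
  have "(\<Sum>x\<in>L. \<Sum>i<d x. sc (f x i) (single x (unitv i))) y j
      = (\<Sum>x\<in>L. \<Sum>i<d x. f x i * (if y = x then unitv i j else 0))"
    by (auto simp: sum_apply_fun sc_def single_def intro!: sum.cong)
  also have "\<dots> = (\<Sum>x\<in>L. if y = x then (\<Sum>i<d x. f x i * unitv i j) else 0)"
    by (rule sum.cong) auto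
  also have "\<dots> = (if y \<in> L then (\<Sum>i<d y. f y i * unitv i j) else 0)"
    using assms(2) by (simp add: sum.delta)
  also have "(\<Sum>i<d y. f y i * unitv i j) = (if j < d y then f y j else 0)"
    by (simp add: unitv_def if_distrib sum.delta cong: if_cong)
  also have "\<dots> = f y j" using assms(1) by (auto simp: sections_def fiber_def)
  finally show "restr L f y j = (\<Sum>x\<in>L. \<Sum>i<d x. sc (f x i) (single x (unitv i))) y j"
    by (simp add: restr_def)
qed

lemma open_agree:
  assumes "openin (gamma_top d N) T" "y \<in> T"
  shows "\<exists>M. finite M \<and> (\<forall>h\<in>sections d. (\<forall>x\<in>M. h x = y x) \<longrightarrow> h \<in> T)"
proof -
  define B where "B = {{g \<in> sections d. pK N K (\<lambda>x i. g x i - f x i) < r} | f K r. f \<in> sections d \<and> finite K \<and> r > 0}"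
  obtain T' where T': "openin (topology_generated_by B) T'" "T = T' \<inter> sections d"
    using assms(1) unfolding gamma_top_def B_def[symmetric] openin_subtopology by blast
  have gen: "generate_topology_on B T'" using T'(1) by (simp add: openin_topology_generated_by_iff)
  have "\<forall>y\<in>U. \<exists>M. finite M \<and> (\<forall>h\<in>sections d. (\<forall>x\<in>M. h x = y x) \<longrightarrow> h \<in> U)"
    if "generate_topology_on B U" for U
    using that
  proof (induction rule: generate_topology_on.induct)
    case Empty
    then show ?case by simp
  next
    case (Int a b)
    show ?case
    proof
      fix y assume y: "y \<in> a \<inter> b"
      obtain M1 where M1: "finite M1" "\<forall>h\<in>sections d. (\<forall>x\<in>M1. h x = y x) \<longrightarrow> h \<in> a"
        using Int.IH(1) y by blast
      obtain M2 where M2: "finite M2" "\<forall>h\<in>sections d. (\<forall>x\<in>M2. h x = y x) \<longrightarrow> h \<in> b"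
        using Int.IH(2) y by blast
      show "\<exists>M. finite M \<and> (\<forall>h\<in>sections d. (\<forall>x\<in>M. h x = y x) \<longrightarrow> h \<in> a \<inter> b)"
        using M1 M2 by (intro exI[of _ "M1 \<union> M2"]) auto
    qed
  next
    case (UN K)
    show ?case
    proof
      fix y assume "y \<in> \<Union>K"
      then obtain k where k: "k \<in> K" "y \<in> k" by blast
      then obtain M where "finite M" "\<forall>h\<in>sections d. (\<forall>x\<in>M. h x = y x) \<longrightarrow> h \<in> k"
        using UN.IH by blast
      then show "\<exists>M. finite M \<and> (\<forall>h\<in>sections d. (\<forall>x\<in>M. h x = y x) \<longrightarrow> h \<in> \<Union>K)"
        using k by blast
    qed
  next
    case (Basis s)
    then obtain f K0 r where s: "s = {g \<in> sections d. pK N K0 (\<lambda>x i. g x i - f x i) < r}" "finite K0"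
      unfolding B_def by blast
    show ?case
    proof
      fix y assume y: "y \<in> s"
      show "\<exists>M. finite M \<and> (\<forall>h\<in>sections d. (\<forall>x\<in>M. h x = y x) \<longrightarrow> h \<in> s)"
      proof (intro exI[of _ K0] conjI ballI impI)
        fix h assume h: "h \<in> sections d" "\<forall>x\<in>K0. h x = y x"
        have "pK N K0 (\<lambda>x i. h x i - f x i) = pK N K0 (\<lambda>x i. y x i - f x i)"
          by (rule pK_cong) (use h in auto)
        then show "h \<in> s" using y h unfolding s by auto
      qed (use s in auto)
    qed
  qed
  from this[OF gen] assms(2) T'(2) obtain M where
    "finite M" "\<forall>h\<in>sections d. (\<forall>x\<in>M. h x = y x) \<longrightarrow> h \<in> T'" by blast
  then show ?thesis using T'(2) by blast
qed

lemma topspace_gamma: "topspace (gamma_top d N) = sections d"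
proof -
  define B where "B = {{g \<in> sections d. pK N K (\<lambda>x i. g x i - f x i) < r} | f K r. f \<in> sections d \<and> finite K \<and> r > 0}"
  have "sections d \<subseteq> \<Union>B"
  proof
    fix y assume y: "y \<in> sections d"
    have "y \<in> {g \<in> sections d. pK N {} (\<lambda>x i. g x i - y x i) < 1}" using y by (simp add: pK_def)
    moreover have "{g \<in> sections d. pK N {} (\<lambda>x i. g x i - y x i) < 1} \<in> B"
      unfolding B_def by (rule CollectI, rule exI[of _ y], rule exI[of _ "{}"], rule exI[of _ 1]) (simp add: y)
    ultimately show "y \<in> \<Union>B" by blast
  qed
  moreover have "\<Union>B \<subseteq> sections d" unfolding B_def by auto
  ultimately show ?thesis
    unfolding gamma_top_def B_def[symmetric] by auto
qed

lemma single_add: "single x (\<lambda>i. v i + w i) = single x v + single x w"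
  by (auto simp: single_def fun_eq_iff)

lemma single_sc: "single x (\<lambda>i. c * v i) = sc c (single x v)"
  by (auto simp: single_def sc_def fun_eq_iff)

lemma sum_single: "finite L \<Longrightarrow> (\<Sum>x\<in>L. single x (g x)) = restr L g"
  by (auto simp: fun_eq_iff sum_apply_fun single_def restr_def if_distrib sum.delta cong: if_cong)

lemma surj_restr:
  assumes lin: "linear_on_sections d A" and inj: "dual_op_injective d A"
    and L: "finite L" and u: "u \<in> sections d"
  shows "\<exists>f\<in>sections d. restr L (A f) = restr L u"
proof (rule ccontr)
  assume nex: "\<not> ?thesis"
  define W where "W = (\<lambda>f. restr L (A f)) ` sections d"
  define v where "v = restr L u"
  have vW: "v \<notin> W" using nex unfolding W_def v_def by auto
  have subW: "vs.subspace W"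
    unfolding vs.subspace_def W_def
  proof (intro conjI ballI allI)
    show "0 \<in> (\<lambda>f. restr L (A f)) ` sections d"
      by (rule image_eqI[of _ _ 0]) (auto simp: A_zero[OF lin] restr_def sec_zero fun_eq_iff)
  next
    fix x y assume "x \<in> (\<lambda>f. restr L (A f)) ` sections d" "y \<in> (\<lambda>f. restr L (A f)) ` sections d"
    then obtain f g where fg: "f \<in> sections d" "g \<in> sections d" "x = restr L (A f)" "y = restr L (A g)" by auto
    have "x + y = restr L (A (f + g))" using fg A_add[OF lin fg(1,2)] by (auto simp: restr_def fun_eq_iff)
    then show "x + y \<in> (\<lambda>f. restr L (A f)) ` sections d" using sec_add[OF fg(1,2)] by auto
  next
    fix c x assume "x \<in> (\<lambda>f. restr L (A f)) ` sections d"
    then obtain f where f: "f \<in> sections d" "x = restr L (A f)" by auto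
    have "sc c x = restr L (A (sc c f))" using f A_sc[OF lin f(1)] by (auto simp: restr_def sc_def fun_eq_iff)
    then show "sc c x \<in> (\<lambda>f. restr L (A f)) ` sections d" using sec_sc[OF f(1)] by auto
  qed
  obtain B where B: "B \<subseteq> W" "vs.independent B" "W \<subseteq> vs.span B" "card B = vs.dim W"
    by (rule vs.basis_exists[of W])
  have spanB: "vs.span B = W" using vs.span_subspace[OF B(1) B(3) subW] .
  have vB: "v \<notin> vs.span B" using vW spanB by simp
  have indep: "vs.independent (insert v B)" by (rule vs.independent_insertI[OF vB B(2)])
  define \<psi> where "\<psi> = vsp.construct (insert v B) (\<lambda>b. if b = v then 1 else 0)"
  have lpsi: "Vector_Spaces.linear sc (*) \<psi>" unfolding \<psi>_def by (rule vsp.linear_construct[OF indep])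
  have padd: "\<psi> (a + b) = \<psi> a + \<psi> b" for a b using lpsi by (simp add: Vector_Spaces.linear_iff)
  have psc: "\<psi> (sc c a) = c * \<psi> a" for c a using lpsi by (simp add: Vector_Spaces.linear_iff)
  have p0: "\<psi> 0 = 0" using padd[of 0 0] by simp
  have pv: "\<psi> v = 1" unfolding \<psi>_def by (subst vsp.construct_basis[OF indep]) auto
  have pB: "\<psi> b = 0" if "b \<in> B" for b
    unfolding \<psi>_def using that vB vs.span_base[OF that] by (subst vsp.construct_basis[OF indep]) auto
  have "vs.subspace {w. \<psi> w = 0}"
    unfolding vs.subspace_def by (auto simp: p0 padd psc)
  then have "vs.span B \<subseteq> {w. \<psi> w = 0}" using pB by (intro vs.span_minimal) auto
  then have pW: "\<psi> w = 0" if "w \<in> W" for w using that spanB by auto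
  have psum: "\<psi> (sum F J) = (\<Sum>j\<in>J. \<psi> (F j))" for F and J :: "'b set"
  proof (induction J rule: infinite_finite_induct)
    case (infinite J) then show ?case by (metis sum.infinite p0)
  next
    case empty then show ?case by (metis sum.empty p0)
  next
    case (insert j J) then show ?case by (metis sum.insert padd)
  qed
  define \<phi> where "\<phi> = (\<lambda>x w. if x \<in> L then \<psi> (single x w) else 0)"
  have supp: "dual_support d \<phi> \<subseteq> L" unfolding dual_support_def \<phi>_def by auto
  have phi_dual: "\<phi> \<in> dual_sections d"
    unfolding dual_sections_def
    using finite_subset[OF supp L]
    by (auto simp: \<phi>_def single_add single_sc padd psc)
  have pair: "pairing d \<phi> g = \<psi> (restr L g)" if g: "g \<in> sections d" for g
  proof -
    have "pairing d \<phi> g = (\<Sum>x\<in>L. \<phi> x (g x))"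
      unfolding pairing_def
    proof (rule sum.mono_neutral_left[OF L supp])
      show "\<forall>i\<in>L - dual_support d \<phi>. \<phi> i (g i) = 0"
        using g unfolding dual_support_def sections_def by auto
    qed
    also have "\<dots> = (\<Sum>x\<in>L. \<psi> (single x (g x)))" by (simp add: \<phi>_def)
    also have "\<dots> = \<psi> (\<Sum>x\<in>L. single x (g x))" by (simp add: psum)
    also have "\<dots> = \<psi> (restr L g)" by (simp add: sum_single[OF L])
    finally show ?thesis .
  qed
  define \<phi>0 where "\<phi>0 = (\<lambda>(x::'a) (w::nat\<Rightarrow>complex). 0::complex)"
  have supp0: "dual_support d \<phi>0 = {}" unfolding dual_support_def \<phi>0_def by auto
  have phi0_dual: "\<phi>0 \<in> dual_sections d"
    unfolding dual_sections_def by (auto simp: supp0) (auto simp: \<phi>0_def)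
  have "\<forall>f\<in>sections d. pairing d \<phi> (A f) = pairing d \<phi>0 (A f)"
  proof
    fix f assume f: "f \<in> sections d"
    have "pairing d \<phi> (A f) = \<psi> (restr L (A f))" by (rule pair[OF A_sec[OF lin f]])
    also have "\<dots> = 0" by (rule pW) (use f in \<open>auto simp: W_def\<close>)
    finally show "pairing d \<phi> (A f) = pairing d \<phi>0 (A f)" by (simp add: pairing_def supp0)
  qed
  then have zero: "\<forall>x. \<forall>w\<in>fiber (d x). \<phi> x w = \<phi>0 x w"
    using inj phi_dual phi0_dual unfolding dual_op_injective_def by blast
  have "pairing d \<phi> u = 0"
    unfolding pairing_def using zero u by (auto simp: sections_def \<phi>0_def intro!: sum.neutral)
  moreover have "pairing d \<phi> u = 1" using pair[OF u] pv by (simp add: v_def)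
  ultimately show False by simp
qed

lemma subspace_dim_eq:
  assumes T: "vs.subspace T" and U: "vs.subspace U" and TU: "T \<subseteq> U"
    and UW: "U \<subseteq> vs.span W" and W: "finite W" and dimle: "vs.dim U \<le> vs.dim T"
  shows "U \<subseteq> T"
proof
  fix u assume u: "u \<in> U"
  show "u \<in> T"
  proof (rule ccontr)
    assume uT: "u \<notin> T"
    obtain B where B: "B \<subseteq> T" "vs.independent B" "T \<subseteq> vs.span B" "card B = vs.dim T"
      by (rule vs.basis_exists[of T])
    have "vs.span B = T" using vs.span_subspace[OF B(1) B(3) T] .
    then have uB: "u \<notin> vs.span B" using uT by simp
    have ind: "vs.independent (insert u B)" by (rule vs.independent_insertI[OF uB B(2)])
    have BW: "B \<subseteq> vs.span W" using B(1) TU UW by auto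
    have finB: "finite B" using vs.independent_span_bound[OF W B(2) BW] by simp
    obtain C where C: "C \<subseteq> U" "vs.independent C" "U \<subseteq> vs.span C" "card C = vs.dim U"
      by (rule vs.basis_exists[of U])
    have finC: "finite C" using vs.independent_span_bound[OF W C(2)] C(1) UW by auto
    have "insert u B \<subseteq> vs.span C" using u B(1) TU C(3) by auto
    then have "card (insert u B) \<le> card C" using vs.independent_span_bound[OF finC ind] by simp
    moreover have "card (insert u B) = card B + 1"
    proof -
      have "u \<notin> B" using uB vs.span_base[of u B] by blast
      then show ?thesis using finB by simp
    qed
    ultimately show False using B(4) C(4) dimle by simp
  qed
qed

lemma restr_add: "restr L (a + b) = restr L a + restr L b"
  and restr_diff: "restr L (a - b) = restr L a - restr L b"
  and restr_sc: "restr L (sc c a) = sc c (restr L a)"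
  and restr_zero: "restr L 0 = 0"
  by (auto simp: restr_def sc_def fun_eq_iff)

lemma restr_sum: "restr L (sum F J) = (\<Sum>j\<in>J. restr L (F j))"
proof (induction J rule: infinite_finite_induct)
  case (infinite J) then show ?case by (metis sum.infinite restr_zero)
next
  case empty then show ?case by (metis sum.empty restr_zero)
next
  case (insert j J) then show ?case by (metis sum.insert restr_add)
qed

lemma restr_restr: "L0 \<subseteq> L \<Longrightarrow> restr L0 (restr L w) = restr L0 w"
  by (auto simp: restr_def fun_eq_iff)

lemma stab:
  assumes lin: "linear_on_sections d A" and inj: "dual_op_injective d A" and K: "finite K"
  shows "\<exists>L0. finite L0 \<and> K \<subseteq> L0 \<and> (\<forall>L. finite L \<longrightarrow> L0 \<subseteq> L \<longrightarrow>
     (\<forall>u\<in>sections d. (\<forall>x\<in>L0. u x = 0) \<longrightarrow>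
        (\<exists>z\<in>sections d. (\<forall>x\<in>K. z x = 0) \<and> restr L (A z) = restr L u)))"
proof -
  define ker where "ker L = {v \<in> sections d. (\<forall>x. x \<notin> K \<longrightarrow> v x = 0) \<and>
      (\<exists>z\<in>sections d. (\<forall>x\<in>K. z x = 0) \<and> restr L (A (v + z)) = 0)}" for L
  have sub: "vs.subspace (ker L)" for L
    unfolding vs.subspace_def
  proof (intro conjI ballI allI)
    show "0 \<in> ker L" unfolding ker_def
      by (auto simp: sec_zero A_zero[OF lin] restr_zero intro!: bexI[of _ 0])
  next
    fix v1 v2 assume "v1 \<in> ker L" "v2 \<in> ker L"
    then obtain z1 z2 where v: "v1 \<in> sections d" "\<forall>x. x \<notin> K \<longrightarrow> v1 x = 0" "v2 \<in> sections d" "\<forall>x. x \<notin> K \<longrightarrow> v2 x = 0"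
      and z: "z1 \<in> sections d" "\<forall>x\<in>K. z1 x = 0" "restr L (A (v1 + z1)) = 0"
             "z2 \<in> sections d" "\<forall>x\<in>K. z2 x = 0" "restr L (A (v2 + z2)) = 0"
      unfolding ker_def by blast
    have "v1 + v2 + (z1 + z2) = (v1 + z1) + (v2 + z2)" by (simp add: algebra_simps)
    then have "A (v1 + v2 + (z1 + z2)) = A (v1 + z1) + A (v2 + z2)"
      using A_add[OF lin sec_add[OF v(1) z(1)] sec_add[OF v(3) z(4)]] by metis
    then have "restr L (A (v1 + v2 + (z1 + z2))) = 0" using z by (simp add: restr_add)
    moreover have "z1 + z2 \<in> sections d" "\<forall>x\<in>K. (z1 + z2) x = 0" using z sec_add by auto
    moreover have "v1 + v2 \<in> sections d" "\<forall>x. x \<notin> K \<longrightarrow> (v1 + v2) x = 0" using v sec_add by auto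
    ultimately show "v1 + v2 \<in> ker L" unfolding ker_def by blast
  next
    fix c v assume "v \<in> ker L"
    then obtain z where v: "v \<in> sections d" "\<forall>x. x \<notin> K \<longrightarrow> v x = 0"
      and z: "z \<in> sections d" "\<forall>x\<in>K. z x = 0" "restr L (A (v + z)) = 0"
      unfolding ker_def by blast
    have "sc c v + sc c z = sc c (v + z)" by (simp add: vs.scale_right_distrib)
    then have "A (sc c v + sc c z) = sc c (A (v + z))" using A_sc[OF lin sec_add[OF v(1) z(1)]] by simp
    then have "restr L (A (sc c v + sc c z)) = 0" using z(3) by (simp add: restr_sc)
    moreover have "sc c z \<in> sections d" "\<forall>x\<in>K. sc c z x = 0" using z sec_sc by (auto simp: sc_def)
    moreover have "sc c v \<in> sections d" "\<forall>x. x \<notin> K \<longrightarrow> sc c v x = 0" using v sec_sc by (auto simp: sc_def)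
    ultimately show "sc c v \<in> ker L" unfolding ker_def by blast
  qed
  define BK where "BK = (\<lambda>(x,i). single x (unitv i)) ` (SIGMA x:K. {..<d x})"
  have finBK: "finite BK" unfolding BK_def using K by auto
  have spanBK: "ker L \<subseteq> vs.span BK" for L
  proof
    fix v assume "v \<in> ker L"
    then have v: "v \<in> sections d" "\<forall>x. x \<notin> K \<longrightarrow> v x = 0" unfolding ker_def by auto
    have "v = restr K v" using v(2) by (auto simp: restr_def fun_eq_iff)
    also have "\<dots> = (\<Sum>x\<in>K. \<Sum>i<d x. sc (v x i) (single x (unitv i)))" by (rule expand[OF v(1) K])
    also have "\<dots> \<in> vs.span BK"
      by (intro vs.span_sum vs.span_scale vs.span_base) (auto simp: BK_def)
    finally show "v \<in> vs.span BK" .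
  qed
  have mono: "ker L2 \<subseteq> ker L1" if "L1 \<subseteq> L2" for L1 L2
  proof
    fix v assume "v \<in> ker L2"
    then obtain z where "v \<in> sections d" "\<forall>x. x \<notin> K \<longrightarrow> v x = 0" "z \<in> sections d" "\<forall>x\<in>K. z x = 0"
      "restr L2 (A (v + z)) = 0" unfolding ker_def by blast
    moreover have "restr L1 (A (v + z)) = 0"
      using restr_restr[OF that, of "A (v + z)"] \<open>restr L2 (A (v + z)) = 0\<close> by (simp add: restr_zero)
    ultimately show "v \<in> ker L1" unfolding ker_def by blast
  qed
  obtain L0 where L0: "finite L0" "K \<subseteq> L0" "\<And>L. finite L \<and> K \<subseteq> L \<Longrightarrow> vs.dim (ker L0) \<le> vs.dim (ker L)"
    using ex_has_least_nat[of "\<lambda>L. finite L \<and> K \<subseteq> L" K "\<lambda>L. vs.dim (ker L)"] K by blast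
  show ?thesis
  proof (intro exI[of _ L0] conjI allI impI ballI)
    show "finite L0" "K \<subseteq> L0" using L0 by auto
    fix L u assume L: "finite L" "L0 \<subseteq> L" and u: "u \<in> sections d" "\<forall>x\<in>L0. u x = 0"
    have keq: "ker L0 \<subseteq> ker L"
      by (rule subspace_dim_eq[OF sub sub mono[OF L(2)] spanBK finBK]) (use L0 L in auto)
    obtain f where f: "f \<in> sections d" "restr L (A f) = restr L u"
      using surj_restr[OF lin inj L(1) u(1)] by blast
    define v where "v = restr K f"
    define z where "z = f - restr K f"
    have vz: "v + z = f" unfolding v_def z_def by simp
    have vs: "v \<in> sections d" unfolding v_def by (rule sec_restr[OF f(1)])
    have zs: "z \<in> sections d" unfolding z_def by (rule sec_diff[OF f(1) sec_restr[OF f(1)]])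
    have z0: "\<forall>x\<in>K. z x = 0" by (auto simp: z_def restr_def)
    have "restr L0 (A (v + z)) = restr L0 (restr L (A f))" using restr_restr[OF L(2)] vz by simp
    also have "\<dots> = restr L0 u" using f(2) restr_restr[OF L(2)] by simp
    also have "\<dots> = 0" using u(2) by (auto simp: restr_def fun_eq_iff)
    finally have "v \<in> ker L0" unfolding ker_def using vs zs z0 by (auto simp: v_def restr_def)
    then have "v \<in> ker L" using keq by auto
    then obtain z' where z': "z' \<in> sections d" "\<forall>x\<in>K. z' x = 0" "restr L (A (v + z')) = 0"
      unfolding ker_def by blast
    have "(v + z) - (v + z') = z - z'" by simp
    then have "A (z - z') = A (v + z) - A (v + z')"
      using A_diff[OF lin sec_add[OF vs zs] sec_add[OF vs z'(1)]] by simp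
    then have "restr L (A (z - z')) = restr L u" using z'(3) f(2) vz by (simp add: restr_diff)
    moreover have "z - z' \<in> sections d" using sec_diff[OF zs z'(1)] .
    moreover have "\<forall>x\<in>K. (z - z') x = 0" using z0 z'(2) by simp
    ultimately show "\<exists>z\<in>sections d. (\<forall>x\<in>K. z x = 0) \<and> restr L (A z) = restr L u" by blast
  qed
qed

theorem lemma3p1:
  fixes d :: "'x::countable \<Rightarrow> nat"
    and N :: "'x \<Rightarrow> (nat \<Rightarrow> complex) \<Rightarrow> real"
    and A :: "('x \<Rightarrow> nat \<Rightarrow> complex) \<Rightarrow> ('x \<Rightarrow> nat \<Rightarrow> complex)"
    and K :: "'x set"
  assumes norms: "\<forall>x. norm_on (d x) (N x)"
    and lin: "linear_on_sections d A"
    and cont: "continuous_map (gamma_top d N) (gamma_top d N) A"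
    and inj: "dual_op_injective d A"
    and K: "finite K" "K \<noteq> {}"
  shows "\<exists>\<epsilon>>0. \<exists>K'. finite K' \<and> K' \<noteq> {} \<and>
           scale_set \<epsilon> (Uset d N K') \<subseteq> (gamma_top d N) closure_of (A ` Uset d N K)"
proof -
  from stab[OF lin inj K(1)] obtain L0 where L0all: "finite L0 \<and> K \<subseteq> L0 \<and> (\<forall>L. finite L \<longrightarrow> L0 \<subseteq> L \<longrightarrow>
     (\<forall>u\<in>sections d. (\<forall>x\<in>L0. u x = 0) \<longrightarrow>
        (\<exists>z\<in>sections d. (\<forall>x\<in>K. z x = 0) \<and> restr L (A z) = restr L u)))" ..
  have L0: "finite L0" "K \<subseteq> L0" using L0all by simp_all
  have st: "\<forall>L. finite L \<longrightarrow> L0 \<subseteq> L \<longrightarrow>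
     (\<forall>u\<in>sections d. (\<forall>x\<in>L0. u x = 0) \<longrightarrow>
        (\<exists>z\<in>sections d. (\<forall>x\<in>K. z x = 0) \<and> restr L (A z) = restr L u))"
    using L0all by (rule conjunct2[OF conjunct2])
  define pre where "pre x i = (SOME f. f \<in> sections d \<and> restr L0 (A f) = restr L0 (single x (unitv i)))" for x i
  have pre: "pre x i \<in> sections d \<and> restr L0 (A (pre x i)) = single x (unitv i)" if "x \<in> L0" "i < d x" for x i
  proof -
    have s: "single x (unitv i) \<in> sections d"
      using that by (auto simp: sections_def fiber_def single_def unitv_def)
    have r: "restr L0 (single x (unitv i)) = single x (unitv i)"
      using that by (auto simp: restr_def single_def fun_eq_iff)
    have "\<exists>f. f \<in> sections d \<and> restr L0 (A f) = restr L0 (single x (unitv i))"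
      using surj_restr[OF lin inj L0(1) s] by blast
    from someI_ex[OF this] show ?thesis by (simp add: pre_def r)
  qed
  define cx where "cx x = (SOME c. c > 0 \<and> (\<forall>v\<in>fiber (d x). (\<Sum>i<d x. cmod (v i)) \<le> c * N x v))" for x
  have cx: "cx x > 0 \<and> (\<forall>v\<in>fiber (d x). (\<Sum>i<d x. cmod (v i)) \<le> cx x * N x v)" for x
    unfolding cx_def by (rule someI_ex) (rule norm_equiv, use norms in blast)
  define cm where "cm = (\<Sum>x\<in>L0. cx x)"
  define C1 where "C1 = (\<Sum>x\<in>L0. \<Sum>i<d x. pK N K (pre x i))"
  have cm0: "cm \<ge> 0" unfolding cm_def using cx by (simp add: sum_nonneg less_imp_le)
  have C10: "C1 \<ge> 0" unfolding C1_def using pre pK_nonneg[OF norms] by (auto intro!: sum_nonneg)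
  have cxcm: "cx x \<le> cm" if "x \<in> L0" for x
    unfolding cm_def by (rule member_le_sum) (use that cx L0 in \<open>auto simp: less_imp_le\<close>)
  define \<epsilon> where "\<epsilon> = 1 / (cm * C1 + 1)"
  have epos: "\<epsilon> > 0" unfolding \<epsilon>_def using mult_nonneg_nonneg[OF cm0 C10] by simp
  have key: "cm * C1 * \<epsilon> < 1" unfolding \<epsilon>_def using mult_nonneg_nonneg[OF cm0 C10] by (simp add: field_simps)
  show ?thesis
  proof (intro exI[of _ \<epsilon>] conjI exI[of _ L0] subsetI)
    show "\<epsilon> > 0" "finite L0" by (fact epos) (fact L0(1))
    show "L0 \<noteq> {}" using L0(2) K(2) by auto
    fix y assume "y \<in> scale_set \<epsilon> (Uset d N L0)"
    then obtain g where g: "g \<in> sections d" "pK N L0 g \<le> 1" and yg: "y = sc (complex_of_real \<epsilon>) g"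
      unfolding scale_set_def Uset_def sc_def by auto
    have ys: "y \<in> sections d" unfolding yg by (rule sec_sc[OF g(1)])
    have pKy: "pK N L0 y \<le> \<epsilon>"
      unfolding yg pK_sc[OF norms g(1)] using g(2) epos by (simp add: mult_left_le)
    define fh where "fh = (\<Sum>x\<in>L0. \<Sum>i<d x. sc (y x i) (pre x i))"
    have pres: "pre x i \<in> sections d" if "x \<in> L0" "i < d x" for x i using pre[OF that] by simp
    have preA: "restr L0 (A (pre x i)) = single x (unitv i)" if "x \<in> L0" "i < d x" for x i
      using pre[OF that] by simp
    have fhs: "fh \<in> sections d" unfolding fh_def by (intro sec_sum sec_sc pres) auto
    have "A fh = (\<Sum>x\<in>L0. A (\<Sum>i<d x. sc (y x i) (pre x i)))"
      unfolding fh_def by (rule A_sum[OF lin]) (intro sec_sum sec_sc pres, auto)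
    also have "\<dots> = (\<Sum>x\<in>L0. \<Sum>i<d x. A (sc (y x i) (pre x i)))"
      by (rule sum.cong[OF refl], rule A_sum[OF lin]) (intro sec_sc pres, auto)
    also have "\<dots> = (\<Sum>x\<in>L0. \<Sum>i<d x. sc (y x i) (A (pre x i)))"
      by (intro sum.cong refl A_sc[OF lin] pres) auto
    finally have "restr L0 (A fh) = (\<Sum>x\<in>L0. \<Sum>i<d x. sc (y x i) (restr L0 (A (pre x i))))"
      by (simp only: restr_sum restr_sc)
    also have "\<dots> = (\<Sum>x\<in>L0. \<Sum>i<d x. sc (y x i) (single x (unitv i)))"
      by (intro sum.cong refl arg_cong[where f="sc _"] preA) auto
    also have "\<dots> = restr L0 y" by (rule expand[OF ys L0(1), symmetric])
    finally have fhy: "restr L0 (A fh) = restr L0 y" .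
    have cb: "cmod (y x i) \<le> cm * \<epsilon>" if "x \<in> L0" "i < d x" for x i
    proof -
      have yx: "y x \<in> fiber (d x)" using ys by (simp add: sections_def)
      have "cmod (y x i) \<le> (\<Sum>i<d x. cmod (y x i))" by (rule member_le_sum) (use that in auto)
      also have "\<dots> \<le> cx x * N x (y x)" using cx yx by blast
      also have "N x (y x) \<le> pK N L0 y" unfolding pK_def
        by (rule member_le_sum) (use that ys norms L0(1) in \<open>auto simp: sections_def norm_on_def\<close>)
      then have "cx x * N x (y x) \<le> cx x * pK N L0 y" using cx by (simp add: less_imp_le)
      also have "\<dots> \<le> cm * \<epsilon>"
        by (rule mult_mono[OF cxcm[OF that(1)] pKy cm0 pK_nonneg[OF norms ys]])
      finally show ?thesis .
    qed
    have "pK N K fh \<le> (\<Sum>x\<in>L0. pK N K (\<Sum>i<d x. sc (y x i) (pre x i)))"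
      unfolding fh_def by (rule pK_sum[OF norms]) (use pre in \<open>auto intro!: sec_sum sec_sc\<close>)
    also have "\<dots> \<le> (\<Sum>x\<in>L0. \<Sum>i<d x. pK N K (sc (y x i) (pre x i)))"
      by (rule sum_mono, rule pK_sum[OF norms]) (use pre in \<open>auto intro!: sec_sc\<close>)
    also have "\<dots> = (\<Sum>x\<in>L0. \<Sum>i<d x. cmod (y x i) * pK N K (pre x i))"
      using pre by (auto simp: pK_sc[OF norms] intro!: sum.cong)
    also have "\<dots> \<le> (\<Sum>x\<in>L0. \<Sum>i<d x. (cm * \<epsilon>) * pK N K (pre x i))"
      using pre cb pK_nonneg[OF norms] by (auto intro!: sum_mono mult_right_mono)
    also have "\<dots> = cm * C1 * \<epsilon>" unfolding C1_def by (simp add: sum_distrib_left mult_ac)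
    finally have pfh: "pK N K fh < 1" using key by simp
    show "y \<in> gamma_top d N closure_of A ` Uset d N K"
      unfolding in_closure_of topspace_gamma
    proof (intro conjI allI impI)
      show "y \<in> sections d" by (fact ys)
      fix T assume T: "y \<in> T \<and> openin (gamma_top d N) T"
      obtain M where M: "finite M" "\<forall>h\<in>sections d. (\<forall>x\<in>M. h x = y x) \<longrightarrow> h \<in> T"
        using open_agree[of d N T y] T by blast
      define u where "u = A fh - y"
      have us: "u \<in> sections d" unfolding u_def by (rule sec_diff[OF A_sec[OF lin fhs] ys])
      have u0: "\<forall>x\<in>L0. u x = 0"
      proof
        fix x assume "x \<in> L0"
        then show "u x = 0" using fun_cong[OF fhy, of x] by (simp add: u_def restr_def)
      qed
      obtain z where z: "z \<in> sections d" "\<forall>x\<in>K. z x = 0" "restr (M \<union> L0) (A z) = restr (M \<union> L0) u"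
        using st[rule_format, of "M \<union> L0" u] M(1) L0(1) us u0 by blast
      define f where "f = fh - z"
      have fs: "f \<in> sections d" unfolding f_def by (rule sec_diff[OF fhs z(1)])
      have Af: "A f = A fh - A z" unfolding f_def by (rule A_diff[OF lin fhs z(1)])
      have "pK N K f = pK N K fh" by (rule pK_cong) (use z(2) in \<open>simp add: f_def\<close>)
      then have "f \<in> Uset d N K" using fs pfh by (simp add: Uset_def)
      moreover have "A f \<in> T"
      proof -
        have "A f x = y x" if "x \<in> M" for x
          using fun_cong[OF z(3), of x] that by (simp add: restr_def Af u_def)
        then show ?thesis using M(2) A_sec[OF lin fs] by blast
      qed
      ultimately show "\<exists>a. a \<in> A ` Uset d N K \<and> a \<in> T" by blast
    qed
  qed
qed

end
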